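(* Let $m>1$, $N\ge2$, $\chi>0$, and let $k\ge2$ be an integer with $\chi<C_k$. Let $T\in(0,\infty)$ and let $X\in C^0([0,T),\mathcal R^N)$ be a solution of the gradient flow system on $[0,T)$. Then any weak blow-up set of $X$ at time $T$ containing at least two indices contains at least $k+1$ indices.
   Context: $\mathcal R^N=\{X\in\mathbb R^N: X_1<\dots<X_N,\ \sum_iX_i=0\}$. For $p\ge2$, $C_p$ is defined by $\frac1{C_p}=\max_{X\in\mathcal R^p}\frac{\sum_{1\le i\ne j\le p}|X_j-X_i|^{1-m}}{\sum_{i=1}^{p-1}(X_{i+1}-X_i)^{1-m}}$. Gradient flow system: for $i=1,\dots,N$, $\dot X_i=-(X_{i+1}-X_i)^{-m}+(X_i-X_{i-1})^{-m}+2\chi\sum_{j\ne i}\mathrm{sign}(j-i)|X_j-X_i|^{-m}$, the first term absent for $i=N$ and the second for $i=1$. A set $\mathcal I=[l,r]$ of consecutive integers in $[1,N]$ weakly blows up at time $T$ if $\liminf_{t\to T^-}(X_{i+1}(t)-X_i(t))=0$ for every $i\in[l,r-1]$; a weak blow-up set is such a set that is maximal for inclusion. *)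

theory Defs
  imports "HOL-Analysis.Analysis"
begin

text \<open>Points of R^N are represented as functions nat => real, indices 1..N used.\<close>

definition region :: "nat \<Rightarrow> (nat \<Rightarrow> real) set" where
  "region N = {X. (\<forall>i\<in>{1..<N}. X i < X (i+1)) \<and> (\<Sum>i=1..N. X i) = 0}"

definition ratioC :: "real \<Rightarrow> nat \<Rightarrow> (nat \<Rightarrow> real) \<Rightarrow> real" where
  "ratioC m p X =
     (\<Sum>i\<in>{1..p}. \<Sum>j\<in>{1..p}-{i}. \<bar>X j - X i\<bar> powr (1 - m)) /
     (\<Sum>i=1..<p. (X (i+1) - X i) powr (1 - m))"

text \<open>1/C_p is the maximum of ratioC over region p (the paper asserts it is attained).\<close>
definition Cconst :: "real \<Rightarrow> nat \<Rightarrow> real" where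
  "Cconst m p = 1 / (SUP X\<in>region p. ratioC m p X)"

definition flow_rhs :: "real \<Rightarrow> real \<Rightarrow> nat \<Rightarrow> (nat \<Rightarrow> real) \<Rightarrow> nat \<Rightarrow> real" where
  "flow_rhs m chi N X i =
     - (if i < N then (X (i+1) - X i) powr (-m) else 0)
     + (if 1 < i then (X i - X (i-1)) powr (-m) else 0)
     + 2 * chi * (\<Sum>j\<in>{1..N}-{i}. real_of_int (sgn (int j - int i)) * \<bar>X j - X i\<bar> powr (-m))"

definition is_solution ::
  "real \<Rightarrow> real \<Rightarrow> nat \<Rightarrow> real \<Rightarrow> (real \<Rightarrow> nat \<Rightarrow> real) \<Rightarrow> bool" where
  "is_solution m chi N T X \<longleftrightarrow>
     (\<forall>t\<in>{0..<T}. X t \<in> region N) \<and>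
     (\<forall>i\<in>{1..N}. continuous_on {0..<T} (\<lambda>t. X t i)) \<and>
     (\<forall>i\<in>{1..N}. \<forall>t\<in>{0<..<T}.
        ((\<lambda>s. X s i) has_real_derivative flow_rhs m chi N (X t) i) (at t))"

definition weak_blowup :: "nat \<Rightarrow> real \<Rightarrow> (real \<Rightarrow> nat \<Rightarrow> real) \<Rightarrow> nat \<Rightarrow> nat \<Rightarrow> bool" where
  "weak_blowup N T X l r \<longleftrightarrow> 1 \<le> l \<and> l \<le> r \<and> r \<le> N \<and>
     (\<forall>i\<in>{l..<r}. Liminf (at_left T) (\<lambda>t. ereal (X t (i+1) - X t i)) = 0)"

definition weak_blowup_set :: "nat \<Rightarrow> real \<Rightarrow> (real \<Rightarrow> nat \<Rightarrow> real) \<Rightarrow> nat \<Rightarrow> nat \<Rightarrow> bool" where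
  "weak_blowup_set N T X l r \<longleftrightarrow> weak_blowup N T X l r \<and>
     (\<forall>l' r'. weak_blowup N T X l' r' \<and> {l..r} \<subseteq> {l'..r'} \<longrightarrow> {l'..r'} = {l..r})"

end

theory Submission
  imports Defs
begin
lemma L1:
  fixes a v :: "nat \<Rightarrow> real"
  shows "(\<Sum>i\<in>{1..<p}. a i * (v (i+1) - v i)) =
     (\<Sum>i\<in>{1..p}. ((if 1 < i then a (i-1) else 0) - (if i < p then a i else 0)) * v i)"
proof (induction p)
  case 0 then show ?case by simp
next
  case (Suc p)
  show ?case
  proof (cases "p = 0")
    case True then show ?thesis by simp
  next
    case False
    have e1: "{1..<Suc p} = insert p {1..<p}" using False by auto
    have e2: "{1..Suc p} = insert (Suc p) {1..p}" by auto
    have "(\<Sum>i\<in>{1..p}. ((if 1 < i then a (i-1) else 0) - (if i < Suc p then a i else 0)) * v i)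
       = (\<Sum>i\<in>{1..p}. ((if 1 < i then a (i-1) else 0) - (if i < p then a i else 0)) * v i) - a p * v p"
    proof -
      have "(\<Sum>i\<in>{1..p}. ((if 1 < i then a (i-1) else 0) - (if i < Suc p then a i else 0)) * v i)
        = (\<Sum>i\<in>{1..p}. ((if 1 < i then a (i-1) else 0) - (if i < p then a i else 0)) * v i - (if i = p then a p * v p else 0))"
        by (rule sum.cong) (auto simp: algebra_simps)
      also have "\<dots> = (\<Sum>i\<in>{1..p}. ((if 1 < i then a (i-1) else 0) - (if i < p then a i else 0)) * v i) - a p * v p"
        using False by (simp add: sum_subtractf)
      finally show ?thesis .
    qed
    then show ?thesis using Suc.IH False by (simp add: e1 e2 algebra_simps)
  qed
qed

lemma L2:
  fixes b s :: "nat \<Rightarrow> nat \<Rightarrow> real" and v :: "nat \<Rightarrow> real"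
  assumes "finite A" and bs: "\<And>i j. b j i * s j i = - (b i j * s i j)"
  shows "(\<Sum>i\<in>A. \<Sum>j\<in>A. if j = i then 0 else b i j * s i j * (v j - v i)) =
     - 2 * (\<Sum>i\<in>A. (\<Sum>j\<in>A. if j = i then 0 else b i j * s i j) * v i)"
proof -
  define c where "c i j = (if j = i then 0 else b i j * s i j)" for i j
  have cs: "c j i = - c i j" for i j using bs[of i j] by (simp add: c_def)
  have "(\<Sum>i\<in>A. \<Sum>j\<in>A. if j = i then 0 else b i j * s i j * (v j - v i)) =
     (\<Sum>i\<in>A. \<Sum>j\<in>A. c i j * v j - c i j * v i)"
    by (intro sum.cong refl) (simp add: c_def algebra_simps)
  also have "\<dots> = (\<Sum>i\<in>A. \<Sum>j\<in>A. c i j * v j) - (\<Sum>i\<in>A. \<Sum>j\<in>A. c i j * v i)"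
    by (simp only: sum_subtractf)
  also have "(\<Sum>i\<in>A. \<Sum>j\<in>A. c i j * v j) = (\<Sum>j\<in>A. \<Sum>i\<in>A. c i j * v j)"
    by (rule sum.swap)
  also have "\<dots> = (\<Sum>j\<in>A. \<Sum>i\<in>A. - (c j i * v j))"
    by (intro sum.cong refl) (metis cs mult_minus_left)
  also have "\<dots> = - (\<Sum>i\<in>A. \<Sum>j\<in>A. c i j * v i)"
    by (simp only: sum_negf)
  finally have "(\<Sum>i\<in>A. \<Sum>j\<in>A. if j = i then 0 else b i j * s i j * (v j - v i)) =
      - 2 * (\<Sum>i\<in>A. \<Sum>j\<in>A. c i j * v i)" by simp
  also have "(\<Sum>i\<in>A. \<Sum>j\<in>A. c i j * v i) = (\<Sum>i\<in>A. (\<Sum>j\<in>A. c i j) * v i)"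
    by (simp only: sum_distrib_right)
  finally show ?thesis by (simp add: c_def)
qed
lemma mono_gap:
  assumes "Y \<in> region k" "1 \<le> a" "a < b" "b \<le> k"
  shows "Y (a+1) \<le> Y b"
  using assms(3,4)
proof (induction b rule: less_induct)
  case (less b)
  show ?case
  proof (cases "b = a+1")
    case True then show ?thesis by simp
  next
    case False
    then have "a < b - 1" "b - 1 < b" using less.prems by auto
    then have "Y (a+1) \<le> Y (b-1)" using less.IH less.prems by auto
    moreover have "Y (b-1) < Y (Suc (b-1))"
    proof -
      have "b - 1 \<in> {1..<k}" using \<open>a < b-1\<close> assms(2) less.prems by auto
      then show ?thesis using assms(1) unfolding region_def by auto
    qed
    ultimately show ?thesis using \<open>a < b - 1\<close> by simp
  qed
qed

lemma reg_strict:
  assumes "Y \<in> region k" "1 \<le> a" "a < b" "b \<le> k"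
  shows "Y a < Y b"
proof -
  have "Y a < Y (a+1)" using assms unfolding region_def by auto
  then show ?thesis using mono_gap[OF assms] by simp
qed

lemma reg_mono:
  assumes "Y \<in> region k" "1 \<le> a" "a \<le> b" "b \<le> k"
  shows "Y a \<le> Y b"
  using reg_strict[OF assms(1,2) _ assms(4), of] assms(3) by (cases "a = b") (auto intro: less_imp_le)

definition gfun :: "real \<Rightarrow> real \<Rightarrow> nat \<Rightarrow> nat \<Rightarrow> (nat \<Rightarrow> real) \<Rightarrow> nat \<Rightarrow> real" where
  "gfun m chi s p x i =
     (if i < p then (x (i+1+s) - x (i+s)) powr (-m) else 0)
   - (if 1 < i then (x (i+s) - x (i-1+s)) powr (-m) else 0)
   - 2 * chi * (\<Sum>j\<in>{1..p}. if j = i then 0 else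
        real_of_int (sgn (int j - int i)) * \<bar>x (j+s) - x (i+s)\<bar> powr (-m))"

lemma powr_neg_le:
  fixes y d m :: real
  assumes "m \<ge> 0" "0 < d" "d \<le> y"
  shows "y powr (-m) \<le> d powr (-m)"
  using assms by (intro powr_mono2') auto

lemma force_bound:
  fixes m chi d :: real
  assumes x: "x \<in> region N" and sp: "s + p \<le> N" and i: "i \<in> {1..p}"
    and d: "d > 0" and chi: "chi \<ge> 0" and m: "m \<ge> 0"
    and hL: "0 < s \<Longrightarrow> d \<le> x (s+1) - x s"
    and hR: "s + p < N \<Longrightarrow> d \<le> x (s+p+1) - x (s+p)"
  shows "\<bar>flow_rhs m chi N x (i+s) + gfun m chi s p x i\<bar> \<le> 2 * d powr (-m) + 2 * chi * real N * d powr (-m)"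
proof -
  define I where "I = i + s"
  define F where "F j = real_of_int (sgn (int j - int I)) * \<bar>x j - x I\<bar> powr (-m)" for j
  define C where "C = {1+s..p+s}"
  have CN: "C \<subseteq> {1..N}" using sp by (auto simp: C_def)
  have IC: "I \<in> C" using i by (auto simp: C_def I_def)
  have A1: "\<bar>(if i < p then (x (i+1+s) - x (i+s)) powr (-m) else 0) - (if I < N then (x (I+1) - x I) powr (-m) else 0)\<bar> \<le> d powr (-m)"
  proof (cases "i < p")
    case True
    then have "I < N" using sp by (simp add: I_def)
    then show ?thesis using True d by (simp add: I_def add.commute add.left_commute)
  next
    case False
    then have ip: "i = p" using i by simp
    show ?thesis
    proof (cases "I < N")
      case True
      then have "s + p < N" by (simp add: I_def ip add.commute)
      then have "d \<le> x (I+1) - x I" using hR by (simp add: I_def ip add.commute)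
      then show ?thesis using False True d m powr_neg_le[of m d "x (I+1) - x I"] by simp
    next
      case False2: False
      then show ?thesis using False d by simp
    qed
  qed
  have A2: "\<bar>(if 1 < I then (x I - x (I-1)) powr (-m) else 0) - (if 1 < i then (x (i+s) - x (i-1+s)) powr (-m) else 0)\<bar> \<le> d powr (-m)"
  proof (cases "1 < i")
    case True
    then have "1 < I" "I - 1 = i - 1 + s" by (auto simp: I_def)
    then show ?thesis using True d by (simp add: I_def)
  next
    case False
    then have i1: "i = 1" using i by simp
    show ?thesis
    proof (cases "1 < I")
      case True
      then have "0 < s" by (simp add: I_def i1)
      then have "d \<le> x I - x (I-1)" using hL by (simp add: I_def i1 add.commute)
      then show ?thesis using False True d m powr_neg_le[of m d "x I - x (I-1)"] by simp
    next
      case False2: False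
      then show ?thesis using False d by simp
    qed
  qed
  have sumeq: "(\<Sum>j\<in>{1..p}. if j = i then 0 else
        real_of_int (sgn (int j - int i)) * \<bar>x (j+s) - x (i+s)\<bar> powr (-m)) = (\<Sum>j\<in>C-{I}. F j)"
  proof -
    have "(\<Sum>j\<in>C-{I}. F j) = (\<Sum>j\<in>C. if j = I then 0 else F j)"
    proof -
      have "(\<Sum>j\<in>C. if j = I then 0 else F j) = (\<Sum>j\<in>C-{I}. if j = I then 0 else F j)"
        by (intro sum.mono_neutral_right) (auto simp: C_def)
      also have "\<dots> = (\<Sum>j\<in>C-{I}. F j)" by (intro sum.cong) auto
      finally show ?thesis by simp
    qed
    also have "\<dots> = (\<Sum>j\<in>{1..p}. if j + s = I then 0 else F (j + s))"
      unfolding C_def by (rule sum.shift_bounds_cl_nat_ivl)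
    also have "\<dots> = (\<Sum>j\<in>{1..p}. if j = i then 0 else
        real_of_int (sgn (int j - int i)) * \<bar>x (j+s) - x (i+s)\<bar> powr (-m))"
      by (intro sum.cong refl) (auto simp: F_def I_def)
    finally show ?thesis by simp
  qed
  have diffeq: "(\<Sum>j\<in>{1..N}-{I}. F j) - (\<Sum>j\<in>C-{I}. F j) = (\<Sum>j\<in>{1..N}-C. F j)"
  proof -
    have "{1..N}-C = ({1..N}-{I}) - (C-{I})" using IC by auto
    then have "(\<Sum>j\<in>{1..N}-C. F j) = (\<Sum>j\<in>{1..N}-{I}. F j) - (\<Sum>j\<in>C-{I}. F j)"
      using CN by (simp only:) (rule sum_diff, auto)
    then show ?thesis by simp
  qed
  have Fb: "\<bar>F j\<bar> \<le> d powr (-m)" if j: "j \<in> {1..N}-C" for j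
  proof -
    have dist: "d \<le> \<bar>x j - x I\<bar>"
    proof (cases "j < 1 + s")
      case True
      then have s0: "0 < s" using j by auto
      have "x j \<le> x s" using reg_mono[OF x, of j s] j True sp by auto
      moreover have "x (s+1) \<le> x I" using reg_mono[OF x, of "s+1" I] i sp by (auto simp: I_def)
      ultimately show ?thesis using hL[OF s0] by simp
    next
      case False
      then have jg: "p + s < j" using j by (auto simp: C_def)
      then have sN: "s + p < N" using j by auto
      have "x (s+p+1) \<le> x j" using reg_mono[OF x, of "s+p+1" j] j jg by auto
      moreover have "x I \<le> x (s+p)" using reg_mono[OF x, of I "s+p"] i sp by (auto simp: I_def)
      ultimately show ?thesis using hR[OF sN] by simp
    qed
    have "\<bar>F j\<bar> \<le> \<bar>x j - x I\<bar> powr (-m)"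
      unfolding F_def by (auto simp: abs_mult sgn_if)
    also have "\<dots> \<le> d powr (-m)" using powr_neg_le[OF m d dist] .
    finally show ?thesis .
  qed
  have B: "\<bar>\<Sum>j\<in>{1..N}-C. F j\<bar> \<le> real N * d powr (-m)"
  proof -
    have "\<bar>\<Sum>j\<in>{1..N}-C. F j\<bar> \<le> (\<Sum>j\<in>{1..N}-C. \<bar>F j\<bar>)" by (rule sum_abs)
    also have "\<dots> \<le> (\<Sum>j\<in>{1..N}-C. d powr (-m))" by (intro sum_mono Fb)
    also have "\<dots> \<le> (\<Sum>j\<in>{1..N}. d powr (-m))" by (intro sum_mono2) auto
    also have "\<dots> = real N * d powr (-m)" by simp
    finally show ?thesis .
  qed
  define P1 where "P1 = (if i < p then (x (i+1+s) - x (i+s)) powr (-m) else 0) - (if I < N then (x (I+1) - x I) powr (-m) else 0)"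
  define P2 where "P2 = (if 1 < I then (x I - x (I-1)) powr (-m) else 0) - (if 1 < i then (x (i+s) - x (i-1+s)) powr (-m) else 0)"
  have flow: "flow_rhs m chi N x (i+s) = - (if I < N then (x (I+1) - x I) powr (-m) else 0)
     + (if 1 < I then (x I - x (I-1)) powr (-m) else 0) + 2 * chi * (\<Sum>j\<in>{1..N}-{I}. F j)"
    unfolding flow_rhs_def F_def I_def by simp
  have gf: "gfun m chi s p x i = (if i < p then (x (i+1+s) - x (i+s)) powr (-m) else 0)
   - (if 1 < i then (x (i+s) - x (i-1+s)) powr (-m) else 0) - 2 * chi * (\<Sum>j\<in>C-{I}. F j)"
    unfolding gfun_def sumeq by simp
  have chis: "2 * chi * (\<Sum>j\<in>{1..N}-{I}. F j) - 2 * chi * (\<Sum>j\<in>C-{I}. F j) = 2 * chi * (\<Sum>j\<in>{1..N}-C. F j)"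
    unfolding diffeq[symmetric] by (simp only: right_diff_distrib)
  have eq: "flow_rhs m chi N x (i+s) + gfun m chi s p x i = P1 + P2 + 2 * chi * (\<Sum>j\<in>{1..N}-C. F j)"
    unfolding flow gf P1_def P2_def chis[symmetric] by linarith
  have B2: "\<bar>2 * chi * (\<Sum>j\<in>{1..N}-C. F j)\<bar> \<le> 2 * chi * (real N * d powr (-m))"
    unfolding abs_mult using chi B by (simp add: mult_left_mono)
  have "\<bar>flow_rhs m chi N x (i+s) + gfun m chi s p x i\<bar> \<le> d powr (-m) + d powr (-m) + 2 * chi * (real N * d powr (-m))"
    unfolding eq using A1[folded P1_def] A2[folded P2_def] B2 by linarith
  then show ?thesis by simp
qed

definition Dc :: "real \<Rightarrow> nat \<Rightarrow> nat \<Rightarrow> (nat \<Rightarrow> real) \<Rightarrow> real" where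
  "Dc m s p x = (\<Sum>i\<in>{1..<p}. (x (i+1+s) - x (i+s)) powr (1-m))"
definition Sc :: "real \<Rightarrow> nat \<Rightarrow> nat \<Rightarrow> (nat \<Rightarrow> real) \<Rightarrow> real" where
  "Sc m s p x = (\<Sum>i\<in>{1..p}. \<Sum>j\<in>{1..p}. if j = i then 0 else \<bar>x (j+s) - x (i+s)\<bar> powr (1-m))"

lemma sg_abs:
  assumes "y \<in> region N" "s + p \<le> N" "i \<in> {1..p}" "j \<in> {1..p}" "i \<noteq> j"
  shows "real_of_int (sgn (int j - int i)) * (y (j+s) - y (i+s)) = \<bar>y (j+s) - y (i+s)\<bar>"
proof (cases "i < j")
  case True
  then have "y (i+s) < y (j+s)" using reg_strict[OF assms(1), of "i+s" "j+s"] assms by auto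
  then show ?thesis using True by simp
next
  case False
  then have "j < i" using assms by simp
  then have "y (j+s) < y (i+s)" using reg_strict[OF assms(1), of "j+s" "i+s"] assms by auto
  then show ?thesis using \<open>j < i\<close> by simp
qed

lemma deriv_G:
  fixes m chi T t :: real
  assumes sol: "is_solution m chi N T X" and sp: "s + p \<le> N" and t: "t \<in> {0<..<T}"
  shows "((\<lambda>\<tau>. Dc m s p (X \<tau>) - chi * Sc m s p (X \<tau>)) has_real_derivative
     (m-1) * (\<Sum>i\<in>{1..p}. gfun m chi s p (X t) i * flow_rhs m chi N (X t) (i+s))) (at t)"
proof -
  define v where "v i = flow_rhs m chi N (X t) (i+s)" for i
  define x where "x = X t"
  have reg: "\<And>\<tau>. \<tau> \<in> {0..<T} \<Longrightarrow> X \<tau> \<in> region N" using sol unfolding is_solution_def by auto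
  have xr: "x \<in> region N" using reg t unfolding x_def by auto
  have dv: "((\<lambda>\<tau>. X \<tau> (i+s)) has_real_derivative v i) (at t)" if "i \<in> {1..p}" for i
    using sol t that sp unfolding is_solution_def v_def by auto
  define a where "a i = (x (i+1+s) - x (i+s)) powr (-m)" for i
  define sg where "sg i j = real_of_int (sgn (int j - int i))" for i j :: nat
  define bb where "bb i j = \<bar>x (j+s) - x (i+s)\<bar> powr (-m)" for i j
  have D1: "((\<lambda>\<tau>. Dc m s p (X \<tau>)) has_real_derivative
      (\<Sum>i\<in>{1..<p}. (1-m) * (a i * (v (i+1) - v i)))) (at t)"
    unfolding Dc_def
  proof (rule DERIV_sum)
    fix i assume i: "i \<in> {1..<p}"
    have pos: "x (i+s) < x (i+1+s)" using reg_strict[OF xr, of "i+s" "i+1+s"] i sp by auto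
    have "((\<lambda>\<tau>. X \<tau> (i+1+s) - X \<tau> (i+s)) has_real_derivative v (i+1) - v i) (at t)"
      using dv[of "i+1"] dv[of i] i by (intro DERIV_diff) auto
    from DERIV_fun_powr[OF this, of "1-m"] pos
    show "((\<lambda>\<tau>. (X \<tau> (i+1+s) - X \<tau> (i+s)) powr (1-m)) has_real_derivative
       (1-m) * (a i * (v (i+1) - v i))) (at t)"
      by (simp add: a_def x_def mult.assoc)
  qed
  have D2: "((\<lambda>\<tau>. Sc m s p (X \<tau>)) has_real_derivative
      (\<Sum>i\<in>{1..p}. \<Sum>j\<in>{1..p}. if j = i then 0 else (1-m) * (sg i j * bb i j * (v j - v i)))) (at t)"
    unfolding Sc_def
  proof (intro DERIV_sum)
    fix i j assume i: "i \<in> {1..p}" and j: "j \<in> {1..p}"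
    show "((\<lambda>\<tau>. if j = i then 0 else \<bar>X \<tau> (j+s) - X \<tau> (i+s)\<bar> powr (1-m)) has_real_derivative
       (if j = i then 0 else (1-m) * (sg i j * bb i j * (v j - v i)))) (at t)"
    proof (cases "j = i")
      case True then show ?thesis by simp
    next
      case False
      have h: "((\<lambda>\<tau>. sg i j * (X \<tau> (j+s) - X \<tau> (i+s))) has_real_derivative sg i j * (v j - v i)) (at t)"
        using dv[OF i] dv[OF j] by (intro DERIV_cmult DERIV_diff)
      have eqx: "sg i j * (x (j+s) - x (i+s)) = \<bar>x (j+s) - x (i+s)\<bar>"
        using sg_abs[OF xr sp i j] False unfolding sg_def by auto
      have pos: "sg i j * (X t (j+s) - X t (i+s)) > 0"
        using eqx False reg_strict[OF xr, of "i+s" "j+s"] reg_strict[OF xr, of "j+s" "i+s"] i j sp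
        unfolding x_def by (cases "i < j") auto
      have "((\<lambda>\<tau>. (sg i j * (X \<tau> (j+s) - X \<tau> (i+s))) powr (1-m)) has_real_derivative
           (1-m) * (sg i j * bb i j * (v j - v i))) (at t)"
        using DERIV_fun_powr[OF h pos, of "1-m"] eqx unfolding bb_def x_def
        by (simp add: algebra_simps)
      then have "((\<lambda>\<tau>. \<bar>X \<tau> (j+s) - X \<tau> (i+s)\<bar> powr (1-m)) has_real_derivative
           (1-m) * (sg i j * bb i j * (v j - v i))) (at t)"
      proof (rule has_field_derivative_transform_within_open[where S="{0<..<T}"])
        show "open {0<..<T::real}" by simp
        show "t \<in> {0<..<T}" by (rule t)
        fix \<tau> :: real assume "\<tau> \<in> {0<..<T}"
        then have "X \<tau> \<in> region N" using reg by auto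
        then show "(sg i j * (X \<tau> (j+s) - X \<tau> (i+s))) powr (1-m) = \<bar>X \<tau> (j+s) - X \<tau> (i+s)\<bar> powr (1-m)"
          using sg_abs[OF _ sp i j] False unfolding sg_def by auto
      qed
      then show ?thesis using False by simp
    qed
  qed
  have D: "((\<lambda>\<tau>. Dc m s p (X \<tau>) - chi * Sc m s p (X \<tau>)) has_real_derivative
     (\<Sum>i\<in>{1..<p}. (1-m) * (a i * (v (i+1) - v i))) - chi *
      (\<Sum>i\<in>{1..p}. \<Sum>j\<in>{1..p}. if j = i then 0 else (1-m) * (sg i j * bb i j * (v j - v i)))) (at t)"
    by (intro DERIV_diff DERIV_cmult D1 D2)
  have e1: "(\<Sum>i\<in>{1..<p}. (1-m) * (a i * (v (i+1) - v i))) =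
     (1-m) * (\<Sum>i\<in>{1..p}. ((if 1 < i then a (i-1) else 0) - (if i < p then a i else 0)) * v i)"
    by (subst L1[symmetric]) (simp add: sum_distrib_left)
  have e2: "(\<Sum>i\<in>{1..p}. \<Sum>j\<in>{1..p}. if j = i then 0 else (1-m) * (sg i j * bb i j * (v j - v i))) =
     (1-m) * (- 2 * (\<Sum>i\<in>{1..p}. (\<Sum>j\<in>{1..p}. if j = i then 0 else sg i j * bb i j) * v i))"
  proof -
    have "(\<Sum>i\<in>{1..p}. \<Sum>j\<in>{1..p}. if j = i then 0 else (1-m) * (sg i j * bb i j * (v j - v i))) =
       (1-m) * (\<Sum>i\<in>{1..p}. \<Sum>j\<in>{1..p}. if j = i then 0 else sg i j * bb i j * (v j - v i))"
      by (simp add: sum_distrib_left if_distrib cong: if_cong)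
    also have "\<dots> = (1-m) * (- 2 * (\<Sum>i\<in>{1..p}. (\<Sum>j\<in>{1..p}. if j = i then 0 else sg i j * bb i j) * v i))"
    proof -
      have bs: "sg j i * bb j i = - (sg i j * bb i j)" for i j
        unfolding sg_def bb_def by (simp add: abs_minus_commute sgn_if)
      show ?thesis using L2[of "{1..p}" sg bb v, OF _ bs] by simp
    qed
    finally show ?thesis .
  qed
  have gv: "gfun m chi s p x i = (if i < p then a i else 0) - (if 1 < i then a (i-1) else 0)
     - 2 * chi * (\<Sum>j\<in>{1..p}. if j = i then 0 else sg i j * bb i j)" if "i \<in> {1..p}" for i
    unfolding gfun_def a_def sg_def bb_def using that by simp
  have e3: "(m-1) * (\<Sum>i\<in>{1..p}. gfun m chi s p x i * v i) =
     (m-1) * (\<Sum>i\<in>{1..p}. ((if i < p then a i else 0) - (if 1 < i then a (i-1) else 0)) * v i)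
     - (m-1) * (2 * chi) * (\<Sum>i\<in>{1..p}. (\<Sum>j\<in>{1..p}. if j = i then 0 else sg i j * bb i j) * v i)"
  proof -
    have "(\<Sum>i\<in>{1..p}. gfun m chi s p x i * v i) =
      (\<Sum>i\<in>{1..p}. ((if i < p then a i else 0) - (if 1 < i then a (i-1) else 0)) * v i
        - (2 * chi) * ((\<Sum>j\<in>{1..p}. if j = i then 0 else sg i j * bb i j) * v i))"
      by (intro sum.cong refl) (simp add: gv algebra_simps)
    also have "\<dots> = (\<Sum>i\<in>{1..p}. ((if i < p then a i else 0) - (if 1 < i then a (i-1) else 0)) * v i)
        - (2 * chi) * (\<Sum>i\<in>{1..p}. (\<Sum>j\<in>{1..p}. if j = i then 0 else sg i j * bb i j) * v i)"
      by (simp add: sum_subtractf sum_distrib_left)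
    finally show ?thesis by (simp only: right_diff_distrib mult.assoc)
  qed
  have e4: "(\<Sum>i\<in>{1..p}. ((if 1 < i then a (i-1) else 0) - (if i < p then a i else 0)) * v i)
     = - (\<Sum>i\<in>{1..p}. ((if i < p then a i else 0) - (if 1 < i then a (i-1) else 0)) * v i)"
    by (simp add: sum_negf[symmetric] algebra_simps)
  define A where "A = (\<Sum>i\<in>{1..p}. ((if i < p then a i else 0) - (if 1 < i then a (i-1) else 0)) * v i)"
  define B where "B = (\<Sum>i\<in>{1..p}. (\<Sum>j\<in>{1..p}. if j = i then 0 else sg i j * bb i j) * v i)"
  have "(\<Sum>i\<in>{1..<p}. (1-m) * (a i * (v (i+1) - v i))) - chi *
      (\<Sum>i\<in>{1..p}. \<Sum>j\<in>{1..p}. if j = i then 0 else (1-m) * (sg i j * bb i j * (v j - v i)))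
     = (1-m) * (- A) - chi * ((1-m) * (- 2 * B))"
    unfolding e1 e2 e4 A_def B_def by (rule refl)
  also have "\<dots> = (m-1) * A - (m-1) * (2 * chi) * B" by (simp add: algebra_simps)
  also have "\<dots> = (m-1) * (\<Sum>i\<in>{1..p}. gfun m chi s p x i * v i)"
    unfolding e3 A_def B_def by (rule refl)
  finally have "(\<Sum>i\<in>{1..<p}. (1-m) * (a i * (v (i+1) - v i))) - chi *
      (\<Sum>i\<in>{1..p}. \<Sum>j\<in>{1..p}. if j = i then 0 else (1-m) * (sg i j * bb i j * (v j - v i)))
     = (m-1) * (\<Sum>i\<in>{1..p}. gfun m chi s p x i * v i)" .
  then show ?thesis using D unfolding v_def x_def by simp
qed
lemma term_le_gap:
  fixes m :: real
  assumes "m > 1" "Y \<in> region k" "i \<in> {1..k}" "j \<in> {1..k}" "i \<noteq> j"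
  shows "\<bar>Y j - Y i\<bar> powr (1-m) \<le> (Y (min i j + 1) - Y (min i j)) powr (1-m)"
proof -
  have pos: "Y (min i j) < Y (min i j + 1)" using assms unfolding region_def by auto
  have "Y (min i j + 1) \<le> Y (max i j)" using mono_gap[OF assms(2), of "min i j" "max i j"] assms by auto
  then have "Y (min i j + 1) - Y (min i j) \<le> \<bar>Y j - Y i\<bar>" by (cases "i \<le> j") auto
  then show ?thesis using pos assms(1) by (intro powr_mono2') auto
qed

lemma ratio_le:
  fixes m :: real
  assumes "m > 1" "Y \<in> region k"
  shows "ratioC m k Y \<le> real k * real k"
proof -
  define den where "den = (\<Sum>i=1..<k. (Y (i+1) - Y i) powr (1 - m))"
  define num where "num = (\<Sum>i\<in>{1..k}. \<Sum>j\<in>{1..k}-{i}. \<bar>Y j - Y i\<bar> powr (1 - m))"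
  have r: "ratioC m k Y = num / den" unfolding ratioC_def num_def den_def by simp
  show ?thesis
  proof (cases "k < 2")
    case True
    then have "den = 0" unfolding den_def by (intro sum.neutral) auto
    then show ?thesis using r by simp
  next
    case False
    have gpos: "(Y (i+1) - Y i) powr (1 - m) > 0" if "i \<in> {1..<k}" for i
    proof -
      have "Y i < Y (i+1)" using assms(2) that unfolding region_def by auto
      then show ?thesis by simp
    qed
    have dpos: "den > 0" unfolding den_def using False
      by (intro sum_pos) (use gpos in auto)
    have tle: "\<bar>Y j - Y i\<bar> powr (1 - m) \<le> den" if "i \<in> {1..k}" "j \<in> {1..k}-{i}" for i j
    proof -
      have "\<bar>Y j - Y i\<bar> powr (1 - m) \<le> (Y (min i j + 1) - Y (min i j)) powr (1-m)"
        using term_le_gap[OF assms, of i j] that by auto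
      also have "\<dots> \<le> den" unfolding den_def
        using that by (intro member_le_sum) (use gpos in \<open>auto intro: less_imp_le\<close>)
      finally show ?thesis .
    qed
    have "num \<le> (\<Sum>i\<in>{1..k}. \<Sum>j\<in>{1..k}-{i}. den)" unfolding num_def
      by (intro sum_mono) (rule tle)
    also have "\<dots> \<le> (\<Sum>i\<in>{1..k}. \<Sum>j\<in>{1..k}. den)"
      by (intro sum_mono sum_mono2) (auto simp: dpos less_imp_le)
    also have "\<dots> = real k * real k * den" by simp
    finally show ?thesis using r dpos by (simp add: divide_le_eq)
  qed
qed

lemma ratio_bdd:
  fixes m :: real
  assumes "m > 1"
  shows "bdd_above (ratioC m k ` region k)"
  using ratio_le[OF assms] by (intro bdd_aboveI2) auto
lemma sum_remove_if:
  fixes f :: "nat \<Rightarrow> real"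
  assumes "finite A"
  shows "(\<Sum>j\<in>A-{i}. f j) = (\<Sum>j\<in>A. if j = i then 0 else f j)"
proof -
  have "(\<Sum>j\<in>A. if j = i then 0 else f j) = (\<Sum>j\<in>A-{i}. if j = i then 0 else f j)"
    using assms by (intro sum.mono_neutral_right) auto
  also have "\<dots> = (\<Sum>j\<in>A-{i}. f j)" by (intro sum.cong) auto
  finally show ?thesis by simp
qed

lemma cluster_ratio:
  fixes m R :: real and x :: "nat \<Rightarrow> real" and s p k :: nat
  assumes m: "m > 1" and p2: "2 \<le> p" and pk: "p \<le> k"
    and incr: "\<And>i. i \<in> {1..<p} \<Longrightarrow> x (i+s) < x (i+1+s)"
    and R: "\<And>Y. Y \<in> region k \<Longrightarrow> ratioC m k Y \<le> R"
  shows "(\<Sum>i\<in>{1..p}. \<Sum>j\<in>{1..p}. if j = i then 0 else \<bar>x (j+s) - x (i+s)\<bar> powr (1-m))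
     \<le> R * ((\<Sum>i\<in>{1..<p}. (x (i+1+s) - x (i+s)) powr (1-m)) + real (k-p))"
proof -
  define Y0 where "Y0 j = (if j \<le> p then x (j+s) else x (p+s) + real (j-p))" for j
  define c where "c = (\<Sum>j=1..k. Y0 j) / real k"
  define Y where "Y j = Y0 j - c" for j
  have kpos: "real k > 0" using p2 pk by auto
  have incr0: "Y0 i < Y0 (i+1)" if "i \<in> {1..<k}" for i
  proof (cases "i+1 \<le> p")
    case True then show ?thesis using incr[of i] that by (simp add: Y0_def add.commute add.left_commute)
  next
    case False
    then have "p \<le> i" by simp
    then show ?thesis
      by (cases "i = p") (auto simp: Y0_def of_nat_diff)
  qed
  have Yreg: "Y \<in> region k"
  proof -
    have "(\<Sum>i=1..k. Y i) = (\<Sum>i=1..k. Y0 i) - real k * c" unfolding Y_def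
      by (simp add: sum_subtractf)
    also have "\<dots> = 0" using kpos unfolding c_def by simp
    finally show ?thesis unfolding region_def using incr0 by (auto simp: Y_def)
  qed
  define num where "num = (\<Sum>i\<in>{1..k}. \<Sum>j\<in>{1..k}-{i}. \<bar>Y0 j - Y0 i\<bar> powr (1 - m))"
  define den where "den = (\<Sum>i=1..<k. (Y0 (i+1) - Y0 i) powr (1 - m))"
  define Dc where "Dc = (\<Sum>i\<in>{1..<p}. (x (i+1+s) - x (i+s)) powr (1-m))"
  have rat: "ratioC m k Y = num / den" unfolding ratioC_def num_def den_def Y_def by simp
  have "den = (\<Sum>i=1..<p. (Y0 (i+1) - Y0 i) powr (1 - m)) + (\<Sum>i=p..<k. (Y0 (i+1) - Y0 i) powr (1 - m))"
    unfolding den_def using p2 pk by (intro sum.atLeastLessThan_concat[symmetric]) auto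
  also have "(\<Sum>i=1..<p. (Y0 (i+1) - Y0 i) powr (1 - m)) = Dc"
    unfolding Dc_def by (intro sum.cong) (auto simp: Y0_def add.commute add.left_commute)
  also have "(\<Sum>i=p..<k. (Y0 (i+1) - Y0 i) powr (1 - m)) = (\<Sum>i=p..<k. 1)"
  proof (intro sum.cong refl)
    fix i assume "i \<in> {p..<k}"
    then have "Y0 (i+1) - Y0 i = 1" by (cases "i = p") (auto simp: Y0_def of_nat_diff)
    then show "(Y0 (i+1) - Y0 i) powr (1 - m) = 1" by simp
  qed
  finally have den_eq: "den = Dc + real (k-p)" by simp
  have Dcpos: "Dc > 0" unfolding Dc_def using p2
  proof (intro sum_pos)
    fix i assume "i \<in> {1..<p}"
    then have "x (i+s) < x (i+1+s)" by (rule incr)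
    then show "0 < (x (i+1+s) - x (i+s)) powr (1-m)" by simp
  qed auto
  have dpos: "den > 0" using den_eq Dcpos by simp
  have "num / den \<le> R" using R[OF Yreg] rat by simp
  then have numle: "num \<le> R * den" using dpos by (simp add: divide_le_eq mult.commute)
  have "(\<Sum>i\<in>{1..p}. \<Sum>j\<in>{1..p}. if j = i then 0 else \<bar>x (j+s) - x (i+s)\<bar> powr (1-m))
      = (\<Sum>i\<in>{1..p}. \<Sum>j\<in>{1..p}-{i}. \<bar>Y0 j - Y0 i\<bar> powr (1 - m))"
  proof (rule sum.cong[OF refl])
    fix i assume i: "i \<in> {1..p}"
    show "(\<Sum>j\<in>{1..p}. if j = i then 0 else \<bar>x (j+s) - x (i+s)\<bar> powr (1-m))
      = (\<Sum>j\<in>{1..p}-{i}. \<bar>Y0 j - Y0 i\<bar> powr (1 - m))"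
      unfolding sum_remove_if[OF finite_atLeastAtMost] using i by (intro sum.cong) (auto simp: Y0_def)
  qed
  also have "\<dots> \<le> (\<Sum>i\<in>{1..p}. \<Sum>j\<in>{1..k}-{i}. \<bar>Y0 j - Y0 i\<bar> powr (1 - m))"
    using pk by (intro sum_mono sum_mono2) auto
  also have "\<dots> \<le> num" unfolding num_def
    using pk by (rule_tac sum_mono2) (auto intro!: sum_nonneg)
  finally show ?thesis using numle den_eq unfolding Dc_def by simp
qed

theorem proposition5p3:
  fixes m chi T :: real and N k l r :: nat and X :: "real \<Rightarrow> nat \<Rightarrow> real"
  assumes "m > 1" and "N \<ge> 2" and "chi > 0" and "k \<ge> 2" and "chi < Cconst m k"
    and "T > 0"
    and "is_solution m chi N T X"
    and "weak_blowup_set N T X l r"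
    and "card {l..r} \<ge> 2"
  shows "card {l..r} \<ge> k + 1"
proof (rule ccontr)
  note m = assms(1) and chi = assms(3) and Cc = assms(5) and T0 = assms(6) and sol = assms(7)
  assume "\<not> card {l..r} \<ge> k+1"
  then have ck: "card {l..r} \<le> k" by simp
  have wb: "weak_blowup N T X l r"
    and maxi: "\<And>l' r'. weak_blowup N T X l' r' \<Longrightarrow> {l..r} \<subseteq> {l'..r'} \<Longrightarrow> {l'..r'} = {l..r}"
    using assms(8) unfolding weak_blowup_set_def by auto
  have l1: "1 \<le> l" "l \<le> r" "r \<le> N"
    and lim: "\<And>i. i \<in> {l..<r} \<Longrightarrow> Liminf (at_left T) (\<lambda>t. ereal (X t (i+1) - X t i)) = 0"
    using wb unfolding weak_blowup_def by auto
  define s where "s = l - 1"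
  define p where "p = r + 1 - l"
  have cardp: "card {l..r} = p" by (simp add: p_def)
  have p2: "2 \<le> p" using assms(9) cardp by simp
  have pk: "p \<le> k" using ck cardp by simp
  have ls: "l = s + 1" and rs: "r = s + p" using l1 p2 by (auto simp: s_def p_def)
  have sp: "s + p \<le> N" using rs l1 by simp
  have reg: "\<And>t. t \<in> {0..<T} \<Longrightarrow> X t \<in> region N" using sol unfolding is_solution_def by auto
  have gappos: "X t i < X t (i+1)" if "t \<in> {0..<T}" "1 \<le> i" "i < N" for t i
    using reg[OF that(1)] that unfolding region_def by auto
  have ev0: "eventually (\<lambda>t. t \<in> {0<..<T}) (at_left T)" using eventually_at_left_real[OF T0] .
  have limpos: "0 \<le> Liminf (at_left T) (\<lambda>t. ereal (X t (i+1) - X t i))" if "1 \<le> i" "i < N" for i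
  proof (rule Liminf_bounded)
    show "eventually (\<lambda>t. 0 \<le> ereal (X t (i+1) - X t i)) (at_left T)"
      using ev0 by eventually_elim (use gappos that in \<open>auto intro: less_imp_le\<close>)
  qed
  have posev: "\<exists>z>0. eventually (\<lambda>t. z \<le> X t (i+1) - X t i) (at_left T)"
    if "1 \<le> i" "i < N" "Liminf (at_left T) (\<lambda>t. ereal (X t (i+1) - X t i)) \<noteq> 0" for i
  proof -
    have "0 < Liminf (at_left T) (\<lambda>t. ereal (X t (i+1) - X t i))"
      using limpos[OF that(1,2)] that(3) by (simp add: order_le_less)
    then obtain z where z: "0 < ereal z" "ereal z < Liminf (at_left T) (\<lambda>t. ereal (X t (i+1) - X t i))"
      using ereal_dense2 by blast
    have "eventually (\<lambda>t. ereal z < ereal (X t (i+1) - X t i)) (at_left T)"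
      using less_LiminfD[OF z(2)] .
    then have "eventually (\<lambda>t. z \<le> X t (i+1) - X t i) (at_left T)"
      by eventually_elim simp
    then show ?thesis using z(1) by auto
  qed
  obtain dL where dL: "dL > 0" "eventually (\<lambda>t. 0 < s \<longrightarrow> dL \<le> X t (s+1) - X t s) (at_left T)"
  proof (cases "0 < s")
    case False then show ?thesis using that[of 1] by auto
  next
    case True
    have "Liminf (at_left T) (\<lambda>t. ereal (X t (s+1) - X t s)) \<noteq> 0"
    proof
      assume h: "Liminf (at_left T) (\<lambda>t. ereal (X t (s+1) - X t s)) = 0"
      have "weak_blowup N T X s r" unfolding weak_blowup_def
      proof (intro conjI ballI)
        fix i assume "i \<in> {s..<r}"
        then show "Liminf (at_left T) (\<lambda>t. ereal (X t (i+1) - X t i)) = 0"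
          using h lim[of i] ls by (cases "i = s") auto
      qed (use True l1 ls in auto)
      moreover have "{l..r} \<subseteq> {s..r}" using ls by auto
      ultimately have "{s..r} = {l..r}" by (rule maxi)
      moreover have "s \<in> {s..r}" "s \<notin> {l..r}" using ls l1 by auto
      ultimately show False by blast
    qed
    then obtain z where "z > 0" "eventually (\<lambda>t. z \<le> X t (s+1) - X t s) (at_left T)"
      using posev[of s] True sp p2 by auto
    then show ?thesis using that[of z] by (auto elim: eventually_mono)
  qed
  obtain dR where dR: "dR > 0" "eventually (\<lambda>t. s + p < N \<longrightarrow> dR \<le> X t (s+p+1) - X t (s+p)) (at_left T)"
  proof (cases "s + p < N")
    case False then show ?thesis using that[of 1] by auto
  next
    case True
    have "Liminf (at_left T) (\<lambda>t. ereal (X t (s+p+1) - X t (s+p))) \<noteq> 0"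
    proof
      assume h: "Liminf (at_left T) (\<lambda>t. ereal (X t (s+p+1) - X t (s+p))) = 0"
      have "weak_blowup N T X l (r+1)" unfolding weak_blowup_def
      proof (intro conjI ballI)
        fix i assume "i \<in> {l..<r+1}"
        then show "Liminf (at_left T) (\<lambda>t. ereal (X t (i+1) - X t i)) = 0"
          using h lim[of i] rs by (cases "i = r") auto
      qed (use True l1 rs in auto)
      moreover have "{l..r} \<subseteq> {l..r+1}" by auto
      ultimately have "{l..r+1} = {l..r}" by (rule maxi)
      moreover have "r+1 \<in> {l..r+1}" "r+1 \<notin> {l..r}" using l1 by auto
      ultimately show False by blast
    qed
    then obtain z where "z > 0" "eventually (\<lambda>t. z \<le> X t (s+p+1) - X t (s+p)) (at_left T)"
      using posev[of "s+p"] True p2 by auto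
    then show ?thesis using that[of z] by (auto elim: eventually_mono)
  qed
  define d where "d = min dL dR"
  have d0: "d > 0" using dL dR by (simp add: d_def)
  have "eventually (\<lambda>t. t \<in> {0<..<T} \<and> (0 < s \<longrightarrow> d \<le> X t (s+1) - X t s)
      \<and> (s + p < N \<longrightarrow> d \<le> X t (s+p+1) - X t (s+p))) (at_left T)"
    using ev0 dL(2) dR(2) by eventually_elim (auto simp: d_def)
  then obtain b where b: "b < T" and bP: "\<And>y. b < y \<Longrightarrow> y < T \<Longrightarrow> y \<in> {0<..<T} \<and> (0 < s \<longrightarrow> d \<le> X y (s+1) - X y s)
      \<and> (s + p < N \<longrightarrow> d \<le> X y (s+p+1) - X y (s+p))"
    unfolding eventually_at_left_field by blast
  define t1 where "t1 = (max b 0 + T) / 2"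
  have t1: "0 < t1" "b < t1" "t1 < T" using b T0 by (auto simp: t1_def)
  have Pt: "t \<in> {0<..<T} \<and> (0 < s \<longrightarrow> d \<le> X t (s+1) - X t s)
      \<and> (s + p < N \<longrightarrow> d \<le> X t (s+p+1) - X t (s+p))" if "t1 \<le> t" "t < T" for t
    using bP[of t] that t1 by auto
  define F where "F = 2 * d powr (-m) + 2 * chi * real N * d powr (-m)"
  define K where "K = (m-1) * (real p * F^2 / 4)"
  define G where "G \<tau> = Dc m s p (X \<tau>) - chi * Sc m s p (X \<tau>)" for \<tau>
  have K0: "K \<ge> 0" using m unfolding K_def by simp
  have Gder: "\<exists>y. (G has_real_derivative y) (at t) \<and> y \<le> K" if "t1 \<le> t" "t < T" for t
  proof -
    have tP: "t \<in> {0<..<T}" "0 < s \<longrightarrow> d \<le> X t (s+1) - X t s"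
      "s + p < N \<longrightarrow> d \<le> X t (s+p+1) - X t (s+p)" using Pt[OF that] by auto
    have xr: "X t \<in> region N" using reg tP(1) by auto
    define v where "v i = flow_rhs m chi N (X t) (i+s)" for i
    define g where "g i = gfun m chi s p (X t) i" for i
    have fb: "\<bar>v i + g i\<bar> \<le> F" if "i \<in> {1..p}" for i
      unfolding v_def g_def F_def
      using force_bound[OF xr sp that d0 _ _ ] chi m tP(2,3) by auto
    have "(\<Sum>i\<in>{1..p}. g i * v i) \<le> (\<Sum>i\<in>{1..p}. F^2 / 4)"
    proof (rule sum_mono)
      fix i assume i: "i \<in> {1..p}"
      have "(v i + g i)^2 \<le> F^2" using fb[OF i] by (metis abs_ge_zero power2_abs power_mono)
      moreover have "g i * v i \<le> (v i + g i)^2 / 4"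
        using sum_squares_ge_zero[of "g i - (v i + g i)/2" 0]
        by (simp add: power2_eq_square algebra_simps)
      ultimately show "g i * v i \<le> F^2 / 4" by simp
    qed
    then have "(m-1) * (\<Sum>i\<in>{1..p}. g i * v i) \<le> K"
      unfolding K_def using m by (intro mult_left_mono) auto
    then show ?thesis using deriv_G[OF sol sp tP(1)] unfolding G_def g_def v_def by blast
  qed
  define R where "R = (SUP Y\<in>region k. ratioC m k Y)"
  have Rge: "ratioC m k Y \<le> R" if "Y \<in> region k" for Y
    unfolding R_def using ratio_bdd[OF m] that by (rule cSUP_upper2) simp
  have CR: "Cconst m k = 1 / R" unfolding Cconst_def R_def ..
  have R0: "R > 0"
  proof (rule ccontr)
    assume "\<not> R > 0"
    then have "1 / R \<le> 0" by simp
    then show False using Cc chi CR by linarith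
  qed
  have chiR: "chi * R < 1" using Cc CR R0 by (simp add: field_simps)
  define M where "M = (G t1 + K * T + chi * R * real (k-p)) / (1 - chi * R)"
  have gapbound: "(X t (s+2) - X t (s+1)) powr (1-m) \<le> M" if "t1 \<le> t" "t < T" for t
  proof -
    have tT: "t \<in> {0<..<T}" using Pt[OF that] by auto
    have tlt: "t < T" using that by simp
    have "G t - K * t \<le> G t1 - K * t1"
    proof (rule DERIV_nonpos_imp_nonincreasing[OF that(1)])
      fix x assume x: "t1 \<le> x" "x \<le> t"
      obtain y where y: "(G has_real_derivative y) (at x)" "y \<le> K" using Gder[of x] x tlt by (meson le_less_trans)
      show "\<exists>y. ((\<lambda>\<tau>. G \<tau> - K * \<tau>) has_real_derivative y) (at x) \<and> y \<le> 0"
        using y by (intro exI[of _ "y - K"]) (auto intro!: derivative_eq_intros)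
    qed
    moreover have "K * (t - t1) \<le> K * T" using K0 that t1 by (intro mult_left_mono) auto
    ultimately have Gt: "G t \<le> G t1 + K * T" by (simp add: right_diff_distrib)
    have incr: "X t (i+s) < X t (i+1+s)" if "i \<in> {1..<p}" for i
      using gappos[of t "i+s"] tT that sp by (auto simp: add.commute add.left_commute)
    have Sb: "Sc m s p (X t) \<le> R * (Dc m s p (X t) + real (k-p))"
      unfolding Sc_def Dc_def using cluster_ratio[where x="X t" and s=s, OF m p2 pk incr Rge] by simp
    have "(1 - chi * R) * Dc m s p (X t) - chi * R * real (k-p) \<le> G t"
    proof -
      have "chi * Sc m s p (X t) \<le> chi * (R * (Dc m s p (X t) + real (k-p)))"
        using Sb chi by (intro mult_left_mono) auto
      also have "\<dots> = chi * R * Dc m s p (X t) + chi * R * real (k-p)" by (simp add: algebra_simps)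
      finally show ?thesis unfolding G_def by (simp add: algebra_simps)
    qed
    then have "(1 - chi * R) * Dc m s p (X t) \<le> G t1 + K * T + chi * R * real (k-p)" using Gt by simp
    then have Dcb: "Dc m s p (X t) \<le> M" unfolding M_def using chiR by (simp add: field_simps)
    have "(X t (1+1+s) - X t (1+s)) powr (1-m) \<le> Dc m s p (X t)" unfolding Dc_def
    proof (rule member_le_sum)
      show "1 \<in> {1..<p}" using p2 by simp
      show "finite {1..<p}" by simp
      fix i assume "i \<in> {1..<p} - {1}"
      then show "0 \<le> (X t (i+1+s) - X t (i+s)) powr (1-m)" by simp
    qed
    then show ?thesis using Dcb by (simp add: add.commute)
  qed
  have gpos: "0 < X t (s+2) - X t (s+1)" if "t1 \<le> t" "t < T" for t
    using gappos[of t "s+1"] Pt[OF that] sp p2 by auto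
  define eta where "eta = M powr (1/(1-m))"
  have Mpos: "M > 0"
  proof -
    have "0 < (X t1 (s+2) - X t1 (s+1)) powr (1-m)" using gpos[of t1] t1 by simp
    moreover have "(X t1 (s+2) - X t1 (s+1)) powr (1-m) \<le> M" using gapbound[of t1] t1 by simp
    ultimately show ?thesis by linarith
  qed
  have eta0: "eta > 0" unfolding eta_def using Mpos by simp
  have etale: "eta \<le> X t (s+2) - X t (s+1)" if "t1 \<le> t" "t < T" for t
  proof -
    define y where "y = X t (s+2) - X t (s+1)"
    have y0: "y > 0" using gpos[OF that] by (simp add: y_def)
    have "y = (y powr (1-m)) powr (1/(1-m))" using y0 m by (simp add: powr_powr)
    also have "\<dots> \<ge> eta" unfolding eta_def
      using gapbound[OF that] y0 m by (intro powr_mono2') (auto simp: y_def divide_nonpos_pos)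
    finally show ?thesis by (simp add: y_def)
  qed
  have "eventually (\<lambda>t. ereal eta \<le> ereal (X t (l+1) - X t l)) (at_left T)"
    unfolding eventually_at_left_field using t1 etale ls
    by (intro exI[of _ t1]) (auto simp: add.commute)
  then have "ereal eta \<le> Liminf (at_left T) (\<lambda>t. ereal (X t (l+1) - X t l))" by (rule Liminf_bounded)
  moreover have "Liminf (at_left T) (\<lambda>t. ereal (X t (l+1) - X t l)) = 0" using lim[of l] l1 ls rs p2 by simp
  ultimately show False using eta0 by simp
qed
end
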